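(* Suppose $\mathcal C$ has a parameterized natural number object. If $P:\mathcal C^{op}\to\mathbf{InfSL}$ is a weak hyperdoctrine with full weak comprehensions and comprehensive diagonals, then $P$ is arithmetic, i.e. the parameterized natural number object satisfies induction in $P$.
   Context: A parameterized natural number object is $(\mathbf N,0:1\to\mathbf N,s:\mathbf N\to\mathbf N)$ such that for all $a:A\to X$, $f:X\to X$ there is a unique $k:A\times\mathbf N\to X$ with $k\langle\mathrm{id}_A,0\rangle=a$ and $k(\mathrm{id}_A\times s)=fk$. It satisfies induction in $P$ if for all $A$ and $\phi\in P(A\times\mathbf N)$, whenever $a:A\vdash\phi(a,0)$ and $a:A,m:\mathbf N\mid\phi(a,m)\vdash\phi(a,s(m))$, then $a:A,n:\mathbf N\vdash\phi(a,n)$. A weak hyperdoctrine is an elementary doctrine (with equality predicates $\delta_A$, written $=_A$) over a weakly cartesian closed base, with Heyting fibres and reindexing, and left and right adjoints to reindexing along product projections satisfying Beck–Chevalley; it is arithmetic if its base has a parameterized natural number object satisfying induction. A weak comprehension of $\alpha\in P(A)$ is an arrow $\{\alpha\}:X\to A$ with $\top\le P_{\{\alpha\}}(\alpha)$ through which every $f:Z\to A$ with $\top\le P_f(\alpha)$ factors (not necessarily uniquely); $P$ has full weak comprehensions if every $\alpha$ has one and $\alpha\le\beta$ whenever $\{\alpha\}$ factors through $\{\beta\}$. Comprehensive diagonals: $f=g$ whenever $\top\vdash f(x)=_Yg(x)$. *)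

theory Defs
  imports Main
begin

text \<open>A category with chosen finite products, presented by a set of objects,
a set of arrows, domain/codomain, composition (cmp g f = g o f), identities,
a chosen terminal object with unique arrows to it, and chosen binary products
with projections and pairing.\<close>

record ('o, 'm) cat =
  c_ob   :: "'o set"
  c_arr  :: "'m set"
  c_dom  :: "'m \<Rightarrow> 'o"
  c_cod  :: "'m \<Rightarrow> 'o"
  c_cmp  :: "'m \<Rightarrow> 'm \<Rightarrow> 'm"
  c_id   :: "'o \<Rightarrow> 'm"
  c_term :: "'o"
  c_bang :: "'o \<Rightarrow> 'm"
  c_prod :: "'o \<Rightarrow> 'o \<Rightarrow> 'o"
  c_p1   :: "'o \<Rightarrow> 'o \<Rightarrow> 'm"
  c_p2   :: "'o \<Rightarrow> 'o \<Rightarrow> 'm"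
  c_pair :: "'m \<Rightarrow> 'm \<Rightarrow> 'm"

definition hom :: "('o, 'm) cat \<Rightarrow> 'o \<Rightarrow> 'o \<Rightarrow> 'm set" where
  "hom C A B = {f \<in> c_arr C. c_dom C f = A \<and> c_cod C f = B}"

definition category :: "('o, 'm) cat \<Rightarrow> bool" where
  "category C \<longleftrightarrow>
     (\<forall>f\<in>c_arr C. c_dom C f \<in> c_ob C \<and> c_cod C f \<in> c_ob C) \<and>
     (\<forall>A\<in>c_ob C. c_id C A \<in> hom C A A) \<and>
     (\<forall>f\<in>c_arr C. \<forall>g\<in>c_arr C. c_cod C f = c_dom C g \<longrightarrow>
         c_cmp C g f \<in> hom C (c_dom C f) (c_cod C g)) \<and>
     (\<forall>f\<in>c_arr C. c_cmp C f (c_id C (c_dom C f)) = f \<and> c_cmp C (c_id C (c_cod C f)) f = f) \<and>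
     (\<forall>f\<in>c_arr C. \<forall>g\<in>c_arr C. \<forall>h\<in>c_arr C.
         c_cod C f = c_dom C g \<longrightarrow> c_cod C g = c_dom C h \<longrightarrow>
         c_cmp C h (c_cmp C g f) = c_cmp C (c_cmp C h g) f)"

definition cartesian :: "('o, 'm) cat \<Rightarrow> bool" where
  "cartesian C \<longleftrightarrow>
     c_term C \<in> c_ob C \<and>
     (\<forall>A\<in>c_ob C. c_bang C A \<in> hom C A (c_term C) \<and>
        (\<forall>f\<in>hom C A (c_term C). f = c_bang C A)) \<and>
     (\<forall>A\<in>c_ob C. \<forall>B\<in>c_ob C.
        c_prod C A B \<in> c_ob C \<and>
        c_p1 C A B \<in> hom C (c_prod C A B) A \<and>
        c_p2 C A B \<in> hom C (c_prod C A B) B \<and>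
        (\<forall>X\<in>c_ob C. \<forall>f\<in>hom C X A. \<forall>g\<in>hom C X B.
           c_pair C f g \<in> hom C X (c_prod C A B) \<and>
           c_cmp C (c_p1 C A B) (c_pair C f g) = f \<and>
           c_cmp C (c_p2 C A B) (c_pair C f g) = g \<and>
           (\<forall>h\<in>hom C X (c_prod C A B).
              c_cmp C (c_p1 C A B) h = f \<and> c_cmp C (c_p2 C A B) h = g \<longrightarrow> h = c_pair C f g)))"

definition tms :: "('o, 'm) cat \<Rightarrow> 'm \<Rightarrow> 'm \<Rightarrow> 'm" where
  "tms C f g = c_pair C (c_cmp C f (c_p1 C (c_dom C f) (c_dom C g)))
                        (c_cmp C g (c_p2 C (c_dom C f) (c_dom C g)))"

definition weakly_cartesian_closed :: "('o, 'm) cat \<Rightarrow> bool" where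
  "weakly_cartesian_closed C \<longleftrightarrow> category C \<and> cartesian C \<and>
     (\<forall>A\<in>c_ob C. \<forall>B\<in>c_ob C. \<exists>E\<in>c_ob C. \<exists>ev\<in>hom C (c_prod C E A) B.
        \<forall>X\<in>c_ob C. \<forall>f\<in>hom C (c_prod C X A) B. \<exists>g\<in>hom C X E.
           c_cmp C ev (tms C g (c_id C A)) = f)"

definition pnno :: "('o, 'm) cat \<Rightarrow> 'o \<Rightarrow> 'm \<Rightarrow> 'm \<Rightarrow> bool" where
  "pnno C N z s \<longleftrightarrow> N \<in> c_ob C \<and> z \<in> hom C (c_term C) N \<and> s \<in> hom C N N \<and>
     (\<forall>A\<in>c_ob C. \<forall>X\<in>c_ob C. \<forall>a\<in>hom C A X. \<forall>f\<in>hom C X X.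
        \<exists>!k. k \<in> hom C (c_prod C A N) X \<and>
             c_cmp C k (c_pair C (c_id C A) (c_cmp C z (c_bang C A))) = a \<and>
             c_cmp C k (tms C (c_id C A) s) = c_cmp C f k)"

text \<open>A doctrine P : C^op \<rightarrow> InfSL with Heyting fibres, presented by the
fibres P(A) (sets of predicates, ordered by le A), the reindexing maps
P_f = re f, the Heyting operations, equality predicates delta A \<in> P(A \<times> A),
and the quantifiers ex A B, all A B : P(A \<times> B) \<rightarrow> P(A) along the projection
A \<times> B \<rightarrow> A.\<close>

record ('o, 'm, 'p) doctrine =
  d_pr    :: "'o \<Rightarrow> 'p set"
  d_le    :: "'o \<Rightarrow> 'p \<Rightarrow> 'p \<Rightarrow> bool"
  d_re    :: "'m \<Rightarrow> 'p \<Rightarrow> 'p"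
  d_top   :: "'o \<Rightarrow> 'p"
  d_bot   :: "'o \<Rightarrow> 'p"
  d_meet  :: "'o \<Rightarrow> 'p \<Rightarrow> 'p \<Rightarrow> 'p"
  d_join  :: "'o \<Rightarrow> 'p \<Rightarrow> 'p \<Rightarrow> 'p"
  d_imp   :: "'o \<Rightarrow> 'p \<Rightarrow> 'p \<Rightarrow> 'p"
  d_delta :: "'o \<Rightarrow> 'p"
  d_ex    :: "'o \<Rightarrow> 'o \<Rightarrow> 'p \<Rightarrow> 'p"
  d_all   :: "'o \<Rightarrow> 'o \<Rightarrow> 'p \<Rightarrow> 'p"

definition heyting_fibres :: "('o, 'm) cat \<Rightarrow> ('o, 'm, 'p) doctrine \<Rightarrow> bool" where
  "heyting_fibres C P \<longleftrightarrow>
     (\<forall>A\<in>c_ob C.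
        (\<forall>x\<in>d_pr P A. d_le P A x x) \<and>
        (\<forall>x\<in>d_pr P A. \<forall>y\<in>d_pr P A. \<forall>w\<in>d_pr P A.
            d_le P A x y \<longrightarrow> d_le P A y w \<longrightarrow> d_le P A x w) \<and>
        (\<forall>x\<in>d_pr P A. \<forall>y\<in>d_pr P A. d_le P A x y \<longrightarrow> d_le P A y x \<longrightarrow> x = y) \<and>
        d_top P A \<in> d_pr P A \<and> d_bot P A \<in> d_pr P A \<and>
        (\<forall>x\<in>d_pr P A. d_le P A x (d_top P A) \<and> d_le P A (d_bot P A) x) \<and>
        (\<forall>x\<in>d_pr P A. \<forall>y\<in>d_pr P A.
           d_meet P A x y \<in> d_pr P A \<and> d_join P A x y \<in> d_pr P A \<and> d_imp P A x y \<in> d_pr P A \<and>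
           (\<forall>w\<in>d_pr P A.
              (d_le P A w (d_meet P A x y) \<longleftrightarrow> d_le P A w x \<and> d_le P A w y) \<and>
              (d_le P A (d_join P A x y) w \<longleftrightarrow> d_le P A x w \<and> d_le P A y w) \<and>
              (d_le P A (d_meet P A w x) y \<longleftrightarrow> d_le P A w (d_imp P A x y)))))"

definition reindexing_functor :: "('o, 'm) cat \<Rightarrow> ('o, 'm, 'p) doctrine \<Rightarrow> bool" where
  "reindexing_functor C P \<longleftrightarrow>
     (\<forall>A\<in>c_ob C. \<forall>B\<in>c_ob C. \<forall>f\<in>hom C A B.
        (\<forall>x\<in>d_pr P B. d_re P f x \<in> d_pr P A) \<and>
        (\<forall>x\<in>d_pr P B. \<forall>y\<in>d_pr P B. d_le P B x y \<longrightarrow> d_le P A (d_re P f x) (d_re P f y)) \<and>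
        d_re P f (d_top P B) = d_top P A \<and>
        d_re P f (d_bot P B) = d_bot P A \<and>
        (\<forall>x\<in>d_pr P B. \<forall>y\<in>d_pr P B.
           d_re P f (d_meet P B x y) = d_meet P A (d_re P f x) (d_re P f y) \<and>
           d_re P f (d_join P B x y) = d_join P A (d_re P f x) (d_re P f y) \<and>
           d_re P f (d_imp P B x y) = d_imp P A (d_re P f x) (d_re P f y))) \<and>
     (\<forall>A\<in>c_ob C. \<forall>x\<in>d_pr P A. d_re P (c_id C A) x = x) \<and>
     (\<forall>A\<in>c_ob C. \<forall>B\<in>c_ob C. \<forall>D\<in>c_ob C. \<forall>f\<in>hom C A B. \<forall>g\<in>hom C B D. \<forall>x\<in>d_pr P D.
        d_re P (c_cmp C g f) x = d_re P f (d_re P g x))"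

text \<open>Elementary structure (Maietti--Rosolini): delta A \<in> P(A \<times> A) with
(i) top \<le> P_<id,id>(delta A);
(ii) for alpha \<in> P(X \<times> A), working in P((X \<times> A) \<times> A):
     P_<p1,p2>(alpha) \<and> P_<p2,p3>(delta A) \<le> P_<p1,p3>(alpha);
(iii) delta A \<boxtimes> delta B \<le> delta (A \<times> B).\<close>
definition elementary :: "('o, 'm) cat \<Rightarrow> ('o, 'm, 'p) doctrine \<Rightarrow> bool" where
  "elementary C P \<longleftrightarrow>
     (\<forall>A\<in>c_ob C. d_delta P A \<in> d_pr P (c_prod C A A) \<and>
        d_le P A (d_top P A) (d_re P (c_pair C (c_id C A) (c_id C A)) (d_delta P A))) \<and>
     (\<forall>X\<in>c_ob C. \<forall>A\<in>c_ob C. \<forall>\<alpha>\<in>d_pr P (c_prod C X A).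
        (let XAA = c_prod C (c_prod C X A) A;
             q1 = c_p1 C (c_prod C X A) A;
             q2 = c_p2 C (c_prod C X A) A;
             p1 = c_cmp C (c_p1 C X A) q1;
             p2 = c_cmp C (c_p2 C X A) q1
         in d_le P XAA
              (d_meet P XAA (d_re P q1 \<alpha>) (d_re P (c_pair C p2 q2) (d_delta P A)))
              (d_re P (c_pair C p1 q2) \<alpha>))) \<and>
     (\<forall>A\<in>c_ob C. \<forall>B\<in>c_ob C.
        (let AB = c_prod C A B;
             ABAB = c_prod C AB AB;
             l = c_p1 C AB AB;
             r = c_p2 C AB AB;
             uA = c_pair C (c_cmp C (c_p1 C A B) l) (c_cmp C (c_p1 C A B) r);
             uB = c_pair C (c_cmp C (c_p2 C A B) l) (c_cmp C (c_p2 C A B) r)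
         in d_le P ABAB (d_meet P ABAB (d_re P uA (d_delta P A)) (d_re P uB (d_delta P B)))
              (d_delta P AB)))"

definition quantifiers :: "('o, 'm) cat \<Rightarrow> ('o, 'm, 'p) doctrine \<Rightarrow> bool" where
  "quantifiers C P \<longleftrightarrow>
     (\<forall>A\<in>c_ob C. \<forall>B\<in>c_ob C. \<forall>\<beta>\<in>d_pr P (c_prod C A B).
        d_ex P A B \<beta> \<in> d_pr P A \<and> d_all P A B \<beta> \<in> d_pr P A \<and>
        (\<forall>\<alpha>\<in>d_pr P A.
           (d_le P A (d_ex P A B \<beta>) \<alpha> \<longleftrightarrow> d_le P (c_prod C A B) \<beta> (d_re P (c_p1 C A B) \<alpha>)) \<and>
           (d_le P A \<alpha> (d_all P A B \<beta>) \<longleftrightarrow> d_le P (c_prod C A B) (d_re P (c_p1 C A B) \<alpha>) \<beta>)) \<and>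
        (\<forall>A'\<in>c_ob C. \<forall>f\<in>hom C A' A.
           d_re P f (d_ex P A B \<beta>) = d_ex P A' B (d_re P (tms C f (c_id C B)) \<beta>) \<and>
           d_re P f (d_all P A B \<beta>) = d_all P A' B (d_re P (tms C f (c_id C B)) \<beta>)))"

definition weak_hyperdoctrine :: "('o, 'm) cat \<Rightarrow> ('o, 'm, 'p) doctrine \<Rightarrow> bool" where
  "weak_hyperdoctrine C P \<longleftrightarrow> weakly_cartesian_closed C \<and> heyting_fibres C P \<and>
     reindexing_functor C P \<and> elementary C P \<and> quantifiers C P"

definition weak_comprehension :: "('o, 'm) cat \<Rightarrow> ('o, 'm, 'p) doctrine \<Rightarrow> 'o \<Rightarrow> 'p \<Rightarrow> 'm \<Rightarrow> bool" where
  "weak_comprehension C P A \<alpha> c \<longleftrightarrow> c \<in> c_arr C \<and> c_cod C c = A \<and>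
     d_le P (c_dom C c) (d_top P (c_dom C c)) (d_re P c \<alpha>) \<and>
     (\<forall>Z\<in>c_ob C. \<forall>f\<in>hom C Z A. d_le P Z (d_top P Z) (d_re P f \<alpha>) \<longrightarrow>
        (\<exists>h\<in>hom C Z (c_dom C c). c_cmp C c h = f))"

definition full_weak_comprehensions :: "('o, 'm) cat \<Rightarrow> ('o, 'm, 'p) doctrine \<Rightarrow> bool" where
  "full_weak_comprehensions C P \<longleftrightarrow>
     (\<forall>A\<in>c_ob C. \<forall>\<alpha>\<in>d_pr P A. \<exists>c. weak_comprehension C P A \<alpha> c) \<and>
     (\<forall>A\<in>c_ob C. \<forall>\<alpha>\<in>d_pr P A. \<forall>\<beta>\<in>d_pr P A. \<forall>c d.
        weak_comprehension C P A \<alpha> c \<longrightarrow> weak_comprehension C P A \<beta> d \<longrightarrow>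
        (\<exists>h\<in>hom C (c_dom C c) (c_dom C d). c_cmp C d h = c) \<longrightarrow> d_le P A \<alpha> \<beta>)"

definition comprehensive_diagonals :: "('o, 'm) cat \<Rightarrow> ('o, 'm, 'p) doctrine \<Rightarrow> bool" where
  "comprehensive_diagonals C P \<longleftrightarrow>
     (\<forall>X\<in>c_ob C. \<forall>Y\<in>c_ob C. \<forall>f\<in>hom C X Y. \<forall>g\<in>hom C X Y.
        d_le P X (d_top P X) (d_re P (c_pair C f g) (d_delta P Y)) \<longrightarrow> f = g)"

definition satisfies_induction ::
  "('o, 'm) cat \<Rightarrow> ('o, 'm, 'p) doctrine \<Rightarrow> 'o \<Rightarrow> 'm \<Rightarrow> 'm \<Rightarrow> bool" where
  "satisfies_induction C P N z s \<longleftrightarrow>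
     (\<forall>A\<in>c_ob C. \<forall>\<phi>\<in>d_pr P (c_prod C A N).
        d_le P A (d_top P A) (d_re P (c_pair C (c_id C A) (c_cmp C z (c_bang C A))) \<phi>) \<longrightarrow>
        d_le P (c_prod C A N) \<phi> (d_re P (tms C (c_id C A) s) \<phi>) \<longrightarrow>
        d_le P (c_prod C A N) (d_top P (c_prod C A N)) \<phi>)"

end

theory Submission
  imports Defs
begin

lemma hom_cmp: "category C \<Longrightarrow> f \<in> hom C A B \<Longrightarrow> g \<in> hom C B D \<Longrightarrow> c_cmp C g f \<in> hom C A D"
  unfolding category_def hom_def by auto

lemma hom_id: "category C \<Longrightarrow> A \<in> c_ob C \<Longrightarrow> c_id C A \<in> hom C A A"
  unfolding category_def by auto

lemma cmp_assoc: "category C \<Longrightarrow> f \<in> hom C A B \<Longrightarrow> g \<in> hom C B D \<Longrightarrow> h \<in> hom C D E \<Longrightarrow>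
   c_cmp C h (c_cmp C g f) = c_cmp C (c_cmp C h g) f"
  unfolding category_def hom_def by auto

lemma cmp_idl: "category C \<Longrightarrow> f \<in> hom C A B \<Longrightarrow> c_cmp C (c_id C B) f = f"
  unfolding category_def hom_def by auto

lemma cmp_idr: "category C \<Longrightarrow> f \<in> hom C A B \<Longrightarrow> c_cmp C f (c_id C A) = f"
  unfolding category_def hom_def by auto

lemma hom_ob: "category C \<Longrightarrow> f \<in> c_arr C \<Longrightarrow> f \<in> hom C (c_dom C f) (c_cod C f) \<and> c_dom C f \<in> c_ob C"
  unfolding category_def hom_def by auto

lemma hom_tms: "category C \<Longrightarrow> cartesian C \<Longrightarrow> A \<in> c_ob C \<Longrightarrow> N \<in> c_ob C \<Longrightarrow> s \<in> hom C N N \<Longrightarrow>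
   tms C (c_id C A) s \<in> hom C (c_prod C A N) (c_prod C A N)"
proof -
  assume c: "category C" and ca: "cartesian C" and A: "A \<in> c_ob C" and N: "N \<in> c_ob C" and s: "s \<in> hom C N N"
  have d1: "c_dom C (c_id C A) = A" using hom_id[OF c A] unfolding hom_def by auto
  have d2: "c_dom C s = N" using s unfolding hom_def by auto
  have AN: "c_prod C A N \<in> c_ob C" and p1: "c_p1 C A N \<in> hom C (c_prod C A N) A"
    and p2: "c_p2 C A N \<in> hom C (c_prod C A N) N" using ca A N unfolding cartesian_def by auto
  have "c_cmp C (c_id C A) (c_p1 C A N) \<in> hom C (c_prod C A N) A"
    using hom_cmp[OF c p1 hom_id[OF c A]] .
  moreover have "c_cmp C s (c_p2 C A N) \<in> hom C (c_prod C A N) N"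
    using hom_cmp[OF c p2 s] .
  ultimately show ?thesis unfolding tms_def d1 d2 using ca A N AN unfolding cartesian_def by blast
qed

theorem proposition3p5:
  fixes C :: "('o, 'm) cat" and P :: "('o, 'm, 'p) doctrine"
    and N :: 'o and z :: 'm and s :: 'm
  assumes "pnno C N z s"
    and "weak_hyperdoctrine C P"
    and "full_weak_comprehensions C P"
    and "comprehensive_diagonals C P"
  shows "satisfies_induction C P N z s"
  unfolding satisfies_induction_def
proof (intro ballI impI)
  fix A \<phi>
  assume A: "A \<in> c_ob C" and phi: "\<phi> \<in> d_pr P (c_prod C A N)"
  define AN where "AN = c_prod C A N"
  define e0 where "e0 = c_pair C (c_id C A) (c_cmp C z (c_bang C A))"
  define S where "S = tms C (c_id C A) s"
  assume base: "d_le P A (d_top P A) (d_re P e0 \<phi>)"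
    and step: "d_le P (c_prod C A N) \<phi> (d_re P S \<phi>)"
  have c: "category C" and ca: "cartesian C" and hf: "heyting_fibres C P"
    and rf: "reindexing_functor C P"
    using assms(2) unfolding weak_hyperdoctrine_def weakly_cartesian_closed_def by auto
  have N: "N \<in> c_ob C" and z: "z \<in> hom C (c_term C) N" and s: "s \<in> hom C N N"
    and U: "\<forall>A\<in>c_ob C. \<forall>X\<in>c_ob C. \<forall>a\<in>hom C A X. \<forall>f\<in>hom C X X.
        \<exists>!k. k \<in> hom C (c_prod C A N) X \<and>
             c_cmp C k (c_pair C (c_id C A) (c_cmp C z (c_bang C A))) = a \<and>
             c_cmp C k (tms C (c_id C A) s) = c_cmp C f k"
    using assms(1) unfolding pnno_def by auto
  have AN: "AN \<in> c_ob C" using ca A N unfolding cartesian_def AN_def by auto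
  have phi': "\<phi> \<in> d_pr P AN" using phi AN_def by simp
  have step': "d_le P AN \<phi> (d_re P S \<phi>)" using step AN_def by simp
  have bang: "c_bang C A \<in> hom C A (c_term C)" using ca A unfolding cartesian_def by auto
  have z0: "c_cmp C z (c_bang C A) \<in> hom C A N" using hom_cmp[OF c bang z] .
  have e0: "e0 \<in> hom C A AN" using ca A N z0 hom_id[OF c A] unfolding cartesian_def e0_def AN_def by blast
  have S: "S \<in> hom C AN AN" using hom_tms[OF c ca A N s] S_def AN_def by simp
  obtain cc where wc: "weak_comprehension C P AN \<phi> cc"
    using assms(3) AN phi' unfolding full_weak_comprehensions_def by blast
  define X where "X = c_dom C cc"
  have cc: "cc \<in> hom C X AN" and X: "X \<in> c_ob C"
    using wc hom_ob[OF c] unfolding weak_comprehension_def X_def by auto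
  have topc: "d_le P X (d_top P X) (d_re P cc \<phi>)" using wc unfolding weak_comprehension_def X_def by auto
  have fac: "\<And>Z f. Z \<in> c_ob C \<Longrightarrow> f \<in> hom C Z AN \<Longrightarrow> d_le P Z (d_top P Z) (d_re P f \<phi>) \<Longrightarrow>
        \<exists>h\<in>hom C Z X. c_cmp C cc h = f"
    using wc unfolding weak_comprehension_def X_def by auto
  obtain a where a: "a \<in> hom C A X" and ca0: "c_cmp C cc a = e0" using fac[OF A e0 base] by blast
  have Sc: "c_cmp C S cc \<in> hom C X AN" using hom_cmp[OF c cc S] .
  have reS: "d_re P S \<phi> \<in> d_pr P AN" using rf AN S phi' unfolding reindexing_functor_def by blast
  have rc1: "d_re P cc \<phi> \<in> d_pr P X" using rf AN X cc phi' unfolding reindexing_functor_def by blast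
  have rc2: "d_re P cc (d_re P S \<phi>) \<in> d_pr P X" using rf AN X cc reS unfolding reindexing_functor_def by blast
  have mono: "d_le P X (d_re P cc \<phi>) (d_re P cc (d_re P S \<phi>))"
    using rf AN X cc phi' reS step' unfolding reindexing_functor_def by blast
  have topX: "d_top P X \<in> d_pr P X" using hf X unfolding heyting_fibres_def by blast
  have "d_le P X (d_top P X) (d_re P cc (d_re P S \<phi>))"
    using hf X topX rc1 rc2 topc mono unfolding heyting_fibres_def by blast
  moreover have "d_re P (c_cmp C S cc) \<phi> = d_re P cc (d_re P S \<phi>)"
    using rf AN X cc S phi' unfolding reindexing_functor_def by blast
  ultimately obtain f where f: "f \<in> hom C X X" and cf: "c_cmp C cc f = c_cmp C S cc"
    using fac[OF X Sc] by auto
  obtain k where k: "k \<in> hom C AN X" and k1: "c_cmp C k e0 = a" and k2: "c_cmp C k S = c_cmp C f k"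
    using U A X a f unfolding e0_def S_def AN_def by blast
  have Uid: "\<exists>!k. k \<in> hom C AN AN \<and> c_cmp C k e0 = e0 \<and> c_cmp C k S = c_cmp C S k"
    using U A AN e0 S unfolding e0_def S_def AN_def by blast
  have ck: "c_cmp C cc k \<in> hom C AN AN" using hom_cmp[OF c k cc] .
  have ck1: "c_cmp C (c_cmp C cc k) e0 = e0"
    using cmp_assoc[OF c e0 k cc] k1 ca0 by simp
  have "c_cmp C (c_cmp C cc k) S = c_cmp C cc (c_cmp C f k)"
    using cmp_assoc[OF c S k cc] k2 by simp
  also have "\<dots> = c_cmp C (c_cmp C S cc) k" using cmp_assoc[OF c k f cc] cf by simp
  also have "\<dots> = c_cmp C S (c_cmp C cc k)" using cmp_assoc[OF c k cc S] by simp
  finally have ck2: "c_cmp C (c_cmp C cc k) S = c_cmp C S (c_cmp C cc k)" .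
  have idAN: "c_id C AN \<in> hom C AN AN" using hom_id[OF c AN] .
  have "c_cmp C (c_id C AN) e0 = e0" using cmp_idl[OF c e0] .
  moreover have "c_cmp C (c_id C AN) S = c_cmp C S (c_id C AN)"
    using cmp_idl[OF c S] cmp_idr[OF c S] by simp
  ultimately have ckid: "c_cmp C cc k = c_id C AN"
    using Uid ck ck1 ck2 idAN by blast
  have "d_le P AN (d_re P k (d_top P X)) (d_re P k (d_re P cc \<phi>))"
    using rf AN X k topX rc1 topc unfolding reindexing_functor_def by blast
  moreover have "d_re P k (d_top P X) = d_top P AN"
    using rf AN X k unfolding reindexing_functor_def by blast
  moreover have "d_re P k (d_re P cc \<phi>) = d_re P (c_cmp C cc k) \<phi>"
    using rf AN X k cc phi' unfolding reindexing_functor_def by metis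
  moreover have "d_re P (c_id C AN) \<phi> = \<phi>"
    using rf AN phi' unfolding reindexing_functor_def by blast
  ultimately show "d_le P (c_prod C A N) (d_top P (c_prod C A N)) \<phi>"
    using ckid AN_def by simp
qed

end
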